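(* Let $n$ be a positive integer and $x\in\Gamma_n$. Then \[ \textsc{BPSP}(x)=\xi_n\bigl(\sigma_{\mathrm{RF}}(x)\bigr)-\textsc{MaxCut}(G_x)=n-\tfrac12+\tfrac12\,\#_{\mathrm{dl}}(x)+\tfrac12\,W_{\mathrm{tot}}(G_x)-\textsc{MaxCut}(G_x), \] and \[ \widetilde{\textsc{BPSP}^*}(x)=\textsc{MaxCut}^*(G_x). \]
   Context: Let $[n]=\{1,\dots,n\}$. $\Gamma_n$ is the set of words $x=(x_1,\dots,x_{2n})\in[n]^{2n}$ in which every symbol $i\in[n]$ occurs exactly twice. Colours are the formal symbols $r,b$; $\neg$ swaps $r$ and $b$, $\neg^0$ is the identity and $\neg^1=\neg$. $[\,\cdot\,]$ is the Iverson bracket (1 if true, 0 otherwise). For $i\in[2n-1]$, $\eta(x,i)=[x_{i+1}\in\{x_1,\dots,x_i\}]\oplus[x_i\in\{x_1,\dots,x_{i-1}\}]$ ($\oplus$ = exclusive or). The set of valid colourings is $\Xi_n(x)=\{f\in\{r,b\}^{2n}:\ \forall i\neq j,\ x_i=x_j\Rightarrow f_i\neq f_j\}$, and for $f\in\{r,b\}^{2n}$, $\xi_n(f)=\sum_{i=1}^{2n-1}[f_i\neq f_{i+1}]$. $\textsc{BPSP}(x)=\min_{f\in\Xi_n(x)}\xi_n(f)$. The red-first colouring $\sigma_{\mathrm{RF}}(x)\in\{r,b\}^{2n}$ has $i$-th entry $r$ if $x_i\notin\{x_1,\dots,x_{i-1}\}$ and $b$ otherwise. For $z\in\{r,b\}^n$,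 $\mathcal E_n(x,z)\in\{r,b\}^{2n}$ has $i$-th entry $\neg^{[x_i\in\{x_1,\dots,x_{i-1}\}]}z_{x_i}$, and $\tilde\xi_n(x,z)=\xi_n(\mathcal E_n(x,z))$; $\widetilde{\textsc{BPSP}^*}(x)=\operatorname{argmin}_{z\in\{r,b\}^n}\tilde\xi_n(x,z)$ (a set). For a subset $e\subseteq[n]$, $\theta_x(e)=-\sum_{i=1}^{2n-1}(-1)^{\eta(x,i)}\delta_{e,\{x_i,x_{i+1}\}}$. The BPSP graph is the weighted graph $G_x=(V_x,E_x,W_x)$ with $V_x=[n]$, $E_x=\{\{x_i,x_{i+1}\}: i\in[2n-1],\ x_i\neq x_{i+1},\ \theta_x(\{x_i,x_{i+1}\})\neq0\}$ and $W_x=\theta_x|_{E_x}$. For a weighted graph $G=(V,E,W)$ with $V=[n]$: $W_{\mathrm{tot}}(G)=\sum_{\{i,j\}\in E}W(\{i,j\})$; for $z\in\{r,b\}^n$, $\mathrm{wt}_G(z)=\sum_{\{i,j\}\in E}W(\{i,j\})[z_i\neq z_j]$; $\textsc{MaxCut}(G)=\max_{z\in\{r,b\}^n}\mathrm{wt}_G(z)$ and $\textsc{MaxCut}^*(G)=\operatorname{argmax}_{z\in\{r,b\}^n}\mathrm{wt}_G(z)$. The double letter count is $\#_{\mathrm{dl}}(x)=|\{i\in[2n-1]: x_i=x_{i+1}\}|$. *)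

theory Defs
  imports Complex_Main
begin

text \<open>Words are lists of length 2n; the paper's 1-based position i is list index i-1.
  Colour vectors z in {r,b}^n are lists of length n; z_a is z ! (a-1).\<close>

datatype colour = Red | Blue

fun neg :: "colour \<Rightarrow> colour" where
  "neg Red = Blue" | "neg Blue = Red"

definition negpow :: "bool \<Rightarrow> colour \<Rightarrow> colour" where
  "negpow e c = (if e then neg c else c)"

definition Gamma :: "nat \<Rightarrow> nat list set" where
  "Gamma n = {x. length x = 2*n \<and> set x \<subseteq> {1..n} \<and> (\<forall>a\<in>{1..n}. count_list x a = 2)}"

definition letter :: "nat list \<Rightarrow> nat \<Rightarrow> nat" where
  "letter x i = x ! (i - 1)"

definition seen :: "nat list \<Rightarrow> nat \<Rightarrow> bool" where
  "seen x i = (letter x i \<in> set (take (i - 1) x))"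

definition eta :: "nat list \<Rightarrow> nat \<Rightarrow> bool" where
  "eta x i = (seen x (i+1) \<noteq> seen x i)"

definition Xi :: "nat \<Rightarrow> nat list \<Rightarrow> colour list set" where
  "Xi n x = {f. length f = 2*n \<and> (\<forall>i\<in>{1..2*n}. \<forall>j\<in>{1..2*n}.
      i \<noteq> j \<and> letter x i = letter x j \<longrightarrow> f ! (i-1) \<noteq> f ! (j-1))}"

definition xi :: "nat \<Rightarrow> colour list \<Rightarrow> nat" where
  "xi n f = (\<Sum>i\<in>{1..2*n-1}. if f ! (i-1) \<noteq> f ! i then 1 else 0)"

definition BPSP :: "nat \<Rightarrow> nat list \<Rightarrow> nat" where
  "BPSP n x = Min (xi n ` Xi n x)"

definition sigma_RF :: "nat \<Rightarrow> nat list \<Rightarrow> colour list" where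
  "sigma_RF n x = map (\<lambda>i. if seen x i then Blue else Red) [1..<2*n+1]"

definition Enc :: "nat \<Rightarrow> nat list \<Rightarrow> colour list \<Rightarrow> colour list" where
  "Enc n x z = map (\<lambda>i. negpow (seen x i) (z ! (letter x i - 1))) [1..<2*n+1]"

definition xi_tilde :: "nat \<Rightarrow> nat list \<Rightarrow> colour list \<Rightarrow> nat" where
  "xi_tilde n x z = xi n (Enc n x z)"

definition BPSP_star_tilde :: "nat \<Rightarrow> nat list \<Rightarrow> colour list set" where
  "BPSP_star_tilde n x = {z. length z = n \<and>
      (\<forall>z'. length z' = n \<longrightarrow> xi_tilde n x z \<le> xi_tilde n x z')}"

definition theta :: "nat \<Rightarrow> nat list \<Rightarrow> nat set \<Rightarrow> int" where
  "theta n x e = - (\<Sum>i\<in>{1..2*n-1}.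
      (if eta x i then -1 else 1) * (if e = {letter x i, letter x (i+1)} then 1 else 0))"

type_synonym wgraph = "nat set \<times> nat set set \<times> (nat set \<Rightarrow> int)"

definition bpsp_graph :: "nat \<Rightarrow> nat list \<Rightarrow> wgraph" where
  "bpsp_graph n x = ({1..n},
     {{letter x i, letter x (i+1)} | i. i \<in> {1..2*n-1} \<and> letter x i \<noteq> letter x (i+1)
        \<and> theta n x {letter x i, letter x (i+1)} \<noteq> 0},
     (\<lambda>e. if e \<in> {{letter x i, letter x (i+1)} | i. i \<in> {1..2*n-1} \<and> letter x i \<noteq> letter x (i+1)
        \<and> theta n x {letter x i, letter x (i+1)} \<noteq> 0} then theta n x e else 0))"

definition edges :: "wgraph \<Rightarrow> nat set set" where "edges G = fst (snd G)"
definition weight :: "wgraph \<Rightarrow> nat set \<Rightarrow> int" where "weight G = snd (snd G)"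

definition W_tot :: "wgraph \<Rightarrow> int" where
  "W_tot G = (\<Sum>e\<in>edges G. weight G e)"

definition cut :: "colour list \<Rightarrow> nat set \<Rightarrow> bool" where
  "cut z e = (\<exists>i\<in>e. \<exists>j\<in>e. z ! (i-1) \<noteq> z ! (j-1))"

definition wt :: "wgraph \<Rightarrow> colour list \<Rightarrow> int" where
  "wt G z = (\<Sum>e\<in>edges G. weight G e * (if cut z e then 1 else 0))"

definition MaxCut :: "nat \<Rightarrow> wgraph \<Rightarrow> int" where
  "MaxCut n G = Max (wt G ` {z. length z = n})"

definition MaxCut_star :: "nat \<Rightarrow> wgraph \<Rightarrow> colour list set" where
  "MaxCut_star n G = {z. length z = n \<and> (\<forall>z'. length z' = n \<longrightarrow> wt G z' \<le> wt G z)}"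

definition dl_count :: "nat \<Rightarrow> nat list \<Rightarrow> nat" where
  "dl_count n x = card {i\<in>{1..2*n-1}. letter x i = letter x (i+1)}"

end

theory Submission imports Defs begin

lemma count3:
  assumes "k < l" "l < m" "m < length x" "x!k = a" "x!l = a" "x!m = a"
  shows "count_list x a \<ge> 3"
proof -
  have "count_list x a = card {p. p < length x \<and> a = x!p}"
    by (simp add: count_list_eq_length_filter length_filter_conv_card)
  moreover have "{k,l,m} \<subseteq> {p. p < length x \<and> a = x!p}" using assms by auto
  moreover have "card {k,l,m} = 3" using assms by auto
  moreover have "finite {p. p < length x \<and> a = x!p}" by simp
  ultimately show ?thesis
    by (metis card_mono)
qed
lemma key:
  assumes G: "x \<in> Gamma n" and ij: "1 \<le> i" "i < j" "j \<le> 2*n" and eq: "letter x i = letter x j"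
  shows "seen x j \<and> \<not> seen x i"
proof
  have len: "length x = 2*n" using G by (simp add: Gamma_def)
  show "seen x j"
  proof -
    have "i - 1 < length (take (j-1) x)" using ij len by simp
    moreover have "take (j-1) x ! (i-1) = letter x j" using ij len eq by (simp add: letter_def)
    ultimately show ?thesis unfolding seen_def by (metis nth_mem)
  qed
  show "\<not> seen x i"
  proof
    assume "seen x i"
    then obtain k where k: "k < i - 1" "x!k = letter x i" unfolding seen_def
      using ij len by (auto simp: in_set_conv_nth)
    let ?a = "letter x i"
    have "count_list x ?a \<ge> 3"
      using count3[of k "i-1" "j-1" x ?a] k ij len eq by (auto simp: letter_def)
    moreover have "?a \<in> {1..n}"
    proof -
      have "i - 1 < length x" using ij len by simp
      hence "?a \<in> set x" unfolding letter_def by (rule nth_mem)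
      thus ?thesis using G by (auto simp: Gamma_def)
    qed
    ultimately show False using G by (auto simp: Gamma_def)
  qed
qed

lemma key2:
  assumes G: "x \<in> Gamma n" and ij: "i \<in> {1..2*n}" "j \<in> {1..2*n}" "i \<noteq> j" and eq: "letter x i = letter x j"
  shows "seen x i \<noteq> seen x j"
proof (cases "i < j")
  case True then show ?thesis using key[OF G, of i j] ij eq by auto
next
  case False then show ?thesis using key[OF G, of j i] ij eq by auto
qed


lemma neg_neg[simp]: "neg (neg c) = c" by (cases c) auto
lemma neg_ne[simp]: "neg c \<noteq> c" by (cases c) auto
lemma neg_ne2[simp]: "c \<noteq> neg c" by (cases c) auto
lemma ne_neg: "c \<noteq> d \<Longrightarrow> d = neg c" by (cases c; cases d) auto
lemma colour_UNIV: "(UNIV :: colour set) = {Red, Blue}" using colour.exhaust by auto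

definition ed :: "nat list \<Rightarrow> nat \<Rightarrow> nat set" where "ed x i = {letter x i, letter x (i+1)}"
definition sg :: "nat list \<Rightarrow> nat \<Rightarrow> int" where "sg x i = (if eta x i then -1 else 1)"

lemma length_Enc[simp]: "length (Enc n x z) = 2*n" by (simp add: Enc_def)

lemma Enc_nth: "1 \<le> i \<Longrightarrow> i \<le> 2*n \<Longrightarrow> Enc n x z ! (i-1) = negpow (seen x i) (z ! (letter x i - 1))"
proof -
  assume "1 \<le> i" "i \<le> 2*n"
  hence "[1..<2*n+1] ! (i-1) = i" by (subst nth_upt) auto
  thus ?thesis using \<open>1 \<le> i\<close> \<open>i \<le> 2*n\<close> unfolding Enc_def by (simp del: upt_Suc)
qed

lemma RF_nth: "1 \<le> i \<Longrightarrow> i \<le> 2*n \<Longrightarrow> sigma_RF n x ! (i-1) = (if seen x i then Blue else Red)"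
  by (simp add: sigma_RF_def del: upt_Suc)

lemma cut_pair: "cut z {a,b} = (z!(a-1) \<noteq> z!(b-1))" by (auto simp: cut_def)

lemma xi_int: "int (xi n f) = (\<Sum>i\<in>{1..2*n-1}. if f!(i-1) \<noteq> f!i then 1 else 0)"
  unfolding xi_def of_nat_sum by (rule sum.cong) auto

lemma step:
  assumes "i \<in> {1..2*n-1}"
  shows "(if Enc n x z ! (i-1) \<noteq> Enc n x z ! i then 1 else 0 :: int)
     = (if eta x i then 1 else 0) + sg x i * (if cut z (ed x i) then 1 else 0)"
proof -
  have "Enc n x z ! i = Enc n x z ! ((i+1)-1)" by simp
  also have "\<dots> = negpow (seen x (i+1)) (z ! (letter x (i+1) - 1))"
    using assms by (intro Enc_nth) auto
  finally have e2: "Enc n x z ! i = negpow (seen x (i+1)) (z ! (letter x (i+1) - 1))" .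
  have e1: "Enc n x z ! (i-1) = negpow (seen x i) (z ! (letter x i - 1))"
    using assms by (intro Enc_nth) auto
  show ?thesis unfolding e1 e2 ed_def cut_pair sg_def eta_def negpow_def
    by (cases "z ! (letter x i - 1)"; cases "z ! (letter x (i+1) - 1)"; cases "seen x i"; cases "seen x (i+1)") auto
qed

lemma RF_sum: "int (xi n (sigma_RF n x)) = (\<Sum>i\<in>{1..2*n-1}. if eta x i then 1 else 0)"
  unfolding xi_int
proof (rule sum.cong)
  fix i assume i: "i \<in> {1..2*n-1}"
  have "sigma_RF n x ! i = sigma_RF n x ! ((i+1)-1)" by simp
  also have "\<dots> = (if seen x (i+1) then Blue else Red)" using i by (intro RF_nth) auto
  finally have a: "sigma_RF n x ! i = (if seen x (i+1) then Blue else Red)" .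
  have b: "sigma_RF n x ! (i-1) = (if seen x i then Blue else Red)" using i by (intro RF_nth) auto
  show "(if sigma_RF n x ! (i-1) \<noteq> sigma_RF n x ! i then 1 else 0::int) = (if eta x i then 1 else 0)"
    unfolding a b eta_def by auto
qed simp

lemma Enc_sum: "int (xi n (Enc n x z)) = (\<Sum>i\<in>{1..2*n-1}. if eta x i then 1 else 0)
   + (\<Sum>i\<in>{1..2*n-1}. sg x i * (if cut z (ed x i) then 1 else 0))"
  unfolding xi_int sum.distrib[symmetric] by (rule sum.cong[OF refl]) (rule step, assumption)

lemma edges_eq: "edges (bpsp_graph n x) = {ed x i | i. i \<in> {1..2*n-1} \<and> letter x i \<noteq> letter x (i+1) \<and> theta n x (ed x i) \<noteq> 0}"
  by (simp add: edges_def bpsp_graph_def ed_def)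

lemma weight_eq: "e \<in> edges (bpsp_graph n x) \<Longrightarrow> weight (bpsp_graph n x) e = theta n x e"
  unfolding edges_def weight_def bpsp_graph_def by auto

lemma theta_eq: "theta n x e = - (\<Sum>i\<in>{i\<in>{1..2*n-1}. ed x i = e}. sg x i)"
  unfolding theta_def sum.inter_filter[OF finite_atLeastAtMost]
  by (intro arg_cong[where f=uminus] sum.cong) (auto simp: sg_def ed_def)

lemma group:
  assumes g: "\<And>a. g {a} = 0"
  shows "(\<Sum>i\<in>{1..2*n-1}. sg x i * g (ed x i)) = - (\<Sum>e\<in>edges (bpsp_graph n x). theta n x e * g e)"
proof -
  let ?I = "{1..2*n-1}"
  have "(\<Sum>i\<in>?I. sg x i * g (ed x i)) = (\<Sum>e\<in>ed x ` ?I. \<Sum>i\<in>{i\<in>?I. ed x i = e}. sg x i * g (ed x i))"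
    by (rule sum.image_gen) simp
  also have "\<dots> = (\<Sum>e\<in>ed x ` ?I. g e * (\<Sum>i\<in>{i\<in>?I. ed x i = e}. sg x i))"
    by (rule sum.cong) (auto simp: sum_distrib_left mult.commute intro!: sum.cong)
  also have "\<dots> = (\<Sum>e\<in>ed x ` ?I. - (theta n x e * g e))"
    by (rule sum.cong) (auto simp: theta_eq)
  also have "\<dots> = (\<Sum>e\<in>edges (bpsp_graph n x). - (theta n x e * g e))"
  proof (rule sum.mono_neutral_right)
    show "edges (bpsp_graph n x) \<subseteq> ed x ` ?I" unfolding edges_eq by auto
    show "\<forall>e\<in>ed x ` ?I - edges (bpsp_graph n x). - (theta n x e * g e) = 0"
    proof
      fix e assume "e \<in> ed x ` ?I - edges (bpsp_graph n x)"
      then obtain i where i: "i \<in> ?I" "e = ed x i" "e \<notin> edges (bpsp_graph n x)" by auto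
      show "- (theta n x e * g e) = 0"
      proof (cases "letter x i = letter x (i+1)")
        case True then show ?thesis using i g by (simp add: ed_def)
      next
        case False then have "theta n x e = 0" using i unfolding edges_eq by blast
        then show ?thesis by simp
      qed
    qed
  qed simp
  finally show ?thesis by (simp add: sum_negf)
qed

lemma wt_eq: "wt (bpsp_graph n x) z = (\<Sum>e\<in>edges (bpsp_graph n x). theta n x e * (if cut z e then 1 else 0))"
  unfolding wt_def by (rule sum.cong) (auto simp: weight_eq)

lemma main: "int (xi n (Enc n x z)) = int (xi n (sigma_RF n x)) - wt (bpsp_graph n x) z"
  unfolding Enc_sum RF_sum wt_eq
  using group[where g="\<lambda>e. if cut z e then 1 else 0" and n=n and x=x] by (simp add: cut_def)


lemma Wtot_eq: "W_tot (bpsp_graph n x) = (\<Sum>e\<in>edges (bpsp_graph n x). theta n x e)"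
  unfolding W_tot_def by (rule sum.cong) (auto simp: weight_eq)

lemma eta_sum:
  assumes G: "x \<in> Gamma n" and n: "n > 0"
  shows "2 * (\<Sum>i\<in>{1..2*n-1}. if eta x i then 1 else 0 :: int)
     = int (2*n-1) + int (dl_count n x) + W_tot (bpsp_graph n x)"
proof -
  let ?I = "{1..2*n-1}"
  let ?S = "(\<Sum>i\<in>?I. if eta x i then 1 else 0 :: int)"
  define g :: "nat set \<Rightarrow> int" where "g e = (if \<exists>a\<in>e. \<exists>b\<in>e. a \<noteq> b then 1 else 0)" for e
  have A: "(\<Sum>i\<in>?I. sg x i) = (\<Sum>i\<in>?I. 1 - 2 * (if eta x i then 1 else 0))"
    by (rule sum.cong) (auto simp: sg_def)
  also have "\<dots> = int (2*n-1) - 2 * ?S"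
    by (simp add: sum_subtractf sum_distrib_left)
  finally have A: "(\<Sum>i\<in>?I. sg x i) = int (2*n-1) - 2 * ?S" .
  have B: "(\<Sum>i\<in>?I. sg x i) = (\<Sum>i\<in>?I. sg x i * g (ed x i)) + (\<Sum>i\<in>?I. sg x i * (1 - g (ed x i)))"
    unfolding sum.distrib[symmetric] by (rule sum.cong) (auto simp: algebra_simps)
  have C: "(\<Sum>i\<in>?I. sg x i * g (ed x i)) = - W_tot (bpsp_graph n x)"
  proof -
    have "(\<Sum>i\<in>?I. sg x i * g (ed x i)) = - (\<Sum>e\<in>edges (bpsp_graph n x). theta n x e * g e)"
      by (rule group) (simp add: g_def)
    also have "(\<Sum>e\<in>edges (bpsp_graph n x). theta n x e * g e) = (\<Sum>e\<in>edges (bpsp_graph n x). theta n x e)"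
      by (rule sum.cong) (auto simp: edges_eq g_def ed_def)
    finally show ?thesis by (simp add: Wtot_eq)
  qed
  have D: "(\<Sum>i\<in>?I. sg x i * (1 - g (ed x i))) = (\<Sum>i\<in>?I. if letter x i = letter x (i+1) then -1 else 0)"
  proof (rule sum.cong)
    fix i assume i: "i \<in> ?I"
    show "sg x i * (1 - g (ed x i)) = (if letter x i = letter x (i+1) then -1 else 0)"
    proof (cases "letter x i = letter x (i+1)")
      case True
      have i1: "i \<in> {1..2*n}" "i+1 \<in> {1..2*n}" using i n by (simp, linarith)+
      have "seen x i \<noteq> seen x (i+1)" using key2[OF G i1] True by auto
      then show ?thesis using True by (auto simp: sg_def eta_def g_def ed_def)
    next
      case False then show ?thesis by (auto simp: g_def ed_def)
    qed
  qed simp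
  also have "\<dots> = - int (dl_count n x)"
    unfolding dl_count_def sum.inter_filter[OF finite_atLeastAtMost, symmetric] by simp
  finally show ?thesis using A B C by linarith
qed

lemma Xi_eq:
  assumes G: "x \<in> Gamma n"
  shows "Xi n x = Enc n x ` {z. length z = n}"
proof
  show "Enc n x ` {z. length z = n} \<subseteq> Xi n x"
  proof
    fix f assume "f \<in> Enc n x ` {z. length z = n}"
    then obtain z where f: "f = Enc n x z" by auto
    show "f \<in> Xi n x" unfolding Xi_def
    proof (intro CollectI conjI ballI impI)
      show "length f = 2*n" using f by simp
      fix i j assume i: "i \<in> {1..2*n}" and j: "j \<in> {1..2*n}" and ij: "i \<noteq> j \<and> letter x i = letter x j"
      have "seen x i \<noteq> seen x j" using key2[OF G i j] ij by auto
      then show "f ! (i-1) \<noteq> f ! (j-1)"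
        using Enc_nth[of i n x z] Enc_nth[of j n x z] i j ij f by (auto simp: negpow_def)
    qed
  qed
next
  show "Xi n x \<subseteq> Enc n x ` {z. length z = n}"
  proof
    fix f assume f: "f \<in> Xi n x"
    have len: "length x = 2*n" using G by (simp add: Gamma_def)
    have lf: "length f = 2*n" using f by (simp add: Xi_def)
    define p where "p a = (SOME i. i \<in> {1..2*n} \<and> letter x i = a)" for a
    define z where "z = map (\<lambda>a. negpow (seen x (p a)) (f ! (p a - 1))) [1..<n+1]"
    have lz: "length z = n" by (simp add: z_def)
    have "Enc n x z = f"
    proof (rule nth_equalityI)
      show "length (Enc n x z) = length f" using lf by simp
      fix k assume "k < length (Enc n x z)"
      hence k: "k < 2*n" by simp
      define i where "i = k+1"
      have i: "i \<in> {1..2*n}" "k = i - 1" using k by (auto simp: i_def)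
      define a where "a = letter x i"
      have "a \<in> set x" unfolding a_def letter_def using i len k by (intro nth_mem) simp
      hence a: "a \<in> {1..n}" using G by (auto simp: Gamma_def)
      have "\<exists>j. j \<in> {1..2*n} \<and> letter x j = a" using i a_def by blast
      hence pa: "p a \<in> {1..2*n}" "letter x (p a) = a" unfolding p_def by (metis (mono_tags, lifting) someI_ex)+
      have za: "z ! (a-1) = negpow (seen x (p a)) (f ! (p a - 1))"
      proof -
        have a1: "1 \<le> a" "a \<le> n" using a by auto
        hence "[1..<n+1] ! (a-1) = a" by (subst nth_upt) auto
        moreover have "a - 1 < length [1..<n+1]" using a1 by simp
        ultimately show ?thesis unfolding z_def by (simp only: nth_map)
      qed
      have ek: "Enc n x z ! k = negpow (seen x i) (z ! (a - 1))"
        using Enc_nth[of i n x z] i a_def by simp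
      show "Enc n x z ! k = f ! k"
      proof (cases "p a = i")
        case True then show ?thesis using ek za i by (cases "seen x i") (auto simp: negpow_def)
      next
        case False
        have s: "seen x (p a) \<noteq> seen x i" using key2[OF G pa(1) i(1) False] pa a_def by simp
        have c: "f ! (p a - 1) \<noteq> f ! (i - 1)" using f pa i False a_def unfolding Xi_def by auto
        have "f ! (p a - 1) = neg (f ! (i-1))" using ne_neg c by metis
        then show ?thesis using ek za i s by (cases "seen x i") (auto simp: negpow_def)
      qed
    qed
    then show "f \<in> Enc n x ` {z. length z = n}" using lz by blast
  qed
qed


lemma finite_Z: "finite {z :: colour list. length z = n}"
proof -
  have "finite {xs :: colour list. set xs \<subseteq> UNIV \<and> length xs = n}"
    by (rule finite_lists_length_eq) (simp add: colour_UNIV)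
  thus ?thesis by simp
qed

theorem corollary4:
  fixes n :: nat and x :: "nat list"
  assumes "n > 0" and "x \<in> Gamma n"
  shows "real (BPSP n x) = real (xi n (sigma_RF n x)) - real_of_int (MaxCut n (bpsp_graph n x))
       \<and> real (xi n (sigma_RF n x)) - real_of_int (MaxCut n (bpsp_graph n x))
           = real n - 1/2 + real (dl_count n x) / 2 + real_of_int (W_tot (bpsp_graph n x)) / 2
             - real_of_int (MaxCut n (bpsp_graph n x))
       \<and> BPSP_star_tilde n x = MaxCut_star n (bpsp_graph n x)"
proof (intro conjI)
  let ?Z = "{z :: colour list. length z = n}"
  let ?G = "bpsp_graph n x"
  let ?M = "MaxCut n ?G"
  have fin: "finite ?Z" by (rule finite_Z)
  have ne: "replicate n Red \<in> ?Z" by simp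
  have Mge: "\<And>z. z \<in> ?Z \<Longrightarrow> wt ?G z \<le> ?M" unfolding MaxCut_def using fin by (intro Max_ge) auto
  have "?M \<in> wt ?G ` ?Z" unfolding MaxCut_def using fin by (intro Max_in) (auto intro: exI[of _ "replicate n Red"])
  then obtain z0 where z0: "z0 \<in> ?Z" "wt ?G z0 = ?M" by auto
  have img: "xi n ` Xi n x = (\<lambda>z. xi n (Enc n x z)) ` ?Z" using Xi_eq[OF assms(2)] by auto
  have fin2: "finite (xi n ` Xi n x)" unfolding img using fin by simp
  have "BPSP n x \<in> xi n ` Xi n x" unfolding BPSP_def using fin2 img by (intro Min_in) (auto intro: exI[of _ "replicate n Red"])
  then obtain z1 where z1: "z1 \<in> ?Z" "BPSP n x = xi n (Enc n x z1)" unfolding img by auto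
  have le: "BPSP n x \<le> xi n (Enc n x z0)" unfolding BPSP_def using fin2 z0 img by (intro Min_le) auto
  have "int (BPSP n x) = int (xi n (sigma_RF n x)) - ?M"
    using main[of n x z1] main[of n x z0] z1 z0 le Mge[OF z1(1)] by linarith
  then show "real (BPSP n x) = real (xi n (sigma_RF n x)) - real_of_int ?M"
    by (metis of_int_diff of_int_of_nat_eq)
  have "2 * int (xi n (sigma_RF n x)) = int (2*n-1) + int (dl_count n x) + W_tot ?G"
    using eta_sum[OF assms(2,1)] RF_sum[of n x] by simp
  hence "2 * real (xi n (sigma_RF n x)) = real (2*n-1) + real (dl_count n x) + real_of_int (W_tot ?G)"
  proof -
    assume h: "2 * int (xi n (sigma_RF n x)) = int (2*n-1) + int (dl_count n x) + W_tot ?G"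
    have "real_of_int (2 * int (xi n (sigma_RF n x))) = real_of_int (int (2*n-1) + int (dl_count n x) + W_tot ?G)"
      using h by (rule arg_cong)
    thus ?thesis by simp
  qed
  moreover have "real (2*n-1) = 2 * real n - 1" using assms(1) by (simp add: of_nat_diff)
  ultimately show "real (xi n (sigma_RF n x)) - real_of_int ?M
           = real n - 1/2 + real (dl_count n x) / 2 + real_of_int (W_tot ?G) / 2 - real_of_int ?M"
    by (simp add: field_simps)
  show "BPSP_star_tilde n x = MaxCut_star n ?G"
    unfolding BPSP_star_tilde_def MaxCut_star_def xi_tilde_def
  proof (intro Collect_cong conj_cong refl iffI allI impI)
    fix z z' :: "colour list" assume "\<forall>z'. length z' = n \<longrightarrow> xi n (Enc n x z) \<le> xi n (Enc n x z')" "length z' = n"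
    then show "wt ?G z' \<le> wt ?G z" using main[of n x z] main[of n x z'] by fastforce
  next
    fix z z' :: "colour list" assume "\<forall>z'. length z' = n \<longrightarrow> wt ?G z' \<le> wt ?G z" "length z' = n"
    then have "wt ?G z' \<le> wt ?G z" by blast
    then show "xi n (Enc n x z) \<le> xi n (Enc n x z')" using main[of n x z] main[of n x z'] by linarith
  qed
qed

end
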